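(* Let $n>2$ be an integer and fix $a\in\mathbb{R}$ and $b\in\mathbb{R}$ with $b\ne0$. For $c\in\mathbb{R}$ define \[\lambda_\pm(c)=\tfrac12\Bigl(2a-(n-1)c\pm\sqrt{\bigl(2a+(n+1)c\bigr)^2+4nb^2}\Bigr)\] (these are the two eigenvalues $\lambda_\pm$ of the matrix $m_n(a,b,c)$ described in the context) and $\lambda_{\mathrm{sep}}(c)=c+2a$. Then: (a) $c\mapsto\lambda_+(c)$ is strictly convex and $c\mapsto\lambda_-(c)$ is strictly concave on $\mathbb{R}$; (b) $\lambda_-(c)<\lambda_{\mathrm{sep}}(c)<\lambda_+(c)$ for every $c\in\mathbb{R}$ (so the three graphs have no common points), and the line $\lambda=c+2a$ is an asymptote of $\lambda=\lambda_+(c)$ as $c\to+\infty$ and of $\lambda=\lambda_-(c)$ as $c\to-\infty$; (c) the line $\lambda=-nc$ (independent of $a$) is the other asymptote of the curves $\lambda=\lambda_\pm(c)$ (namely of $\lambda_+$ as $c\to-\infty$ and of $\lambda_-$ as $c\to+\infty$).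
   Context: For $n>2$ and real $a,b,c$, $m_n(a,b,c)$ is the $(n+1)\times(n+1)$ symmetric matrix with rows/columns indexed $0,\dots,n$, $(0,0)$-entry $-nc$, $(0,j)$- and $(j,0)$-entries $b$ ($j=1,\dots,n$), and lower-right block the circulant $\mathrm{circ}(c,a,0,\dots,0,a)$ (diagonal $c$, entries $a$ at positions $(j,j\pm1 \bmod n)$, zeros elsewhere). *)

theory Defs
  imports "HOL-Analysis.Analysis"
begin

definition strict_convex_on :: "real set \<Rightarrow> (real \<Rightarrow> real) \<Rightarrow> bool" where
  "strict_convex_on S f \<longleftrightarrow> convex S \<and>
     (\<forall>x\<in>S. \<forall>y\<in>S. x \<noteq> y \<longrightarrow> (\<forall>u. 0 < u \<and> u < 1 \<longrightarrow>
        f (u * x + (1 - u) * y) < u * f x + (1 - u) * f y))"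

definition strict_concave_on :: "real set \<Rightarrow> (real \<Rightarrow> real) \<Rightarrow> bool" where
  "strict_concave_on S f \<longleftrightarrow> strict_convex_on S (\<lambda>x. - f x)"

definition lam_plus :: "nat \<Rightarrow> real \<Rightarrow> real \<Rightarrow> real \<Rightarrow> real" where
  "lam_plus n a b c = (2*a - (real n - 1)*c + sqrt ((2*a + (real n + 1)*c)^2 + 4 * real n * b^2)) / 2"

definition lam_minus :: "nat \<Rightarrow> real \<Rightarrow> real \<Rightarrow> real \<Rightarrow> real" where
  "lam_minus n a b c = (2*a - (real n - 1)*c - sqrt ((2*a + (real n + 1)*c)^2 + 4 * real n * b^2)) / 2"

definition lam_sep :: "real \<Rightarrow> real \<Rightarrow> real" where
  "lam_sep a c = c + 2*a"

end

theory Submission imports Defs "HOL-Real_Asymp.Real_Asymp" begin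

lemma F_lim: assumes "(K::real) > 0" shows "((\<lambda>t. sqrt (t^2+K) - t) \<longlongrightarrow> 0) at_top"
  using assms by real_asymp
lemma s_top: assumes "(m::real) > 0" shows "filterlim (\<lambda>c. d + m*c) at_top at_top"
  using assms by real_asymp
lemma s_bot: assumes "(m::real) > 0" shows "filterlim (\<lambda>c. -(d + m*c)) at_top at_bot"
  using assms by real_asymp

lemma sqrt_gt_abs: assumes "(K::real) > 0" shows "\<bar>s\<bar> < sqrt (s^2 + K)"
  using assms by (intro real_less_rsqrt) simp

lemma sqrt_conv:
  fixes K x y u :: real
  assumes K: "K > 0" and xy: "x \<noteq> y" and u: "0 < u" "u < 1"
  shows "sqrt ((u*x+(1-u)*y)^2+K) < u* sqrt(x^2+K)+(1-u)* sqrt(y^2+K)"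
proof -
  define P where "P = sqrt(x^2+K) * sqrt(y^2+K)"
  have "(x*y+K)^2 < (x^2+K)*(y^2+K)"
  proof -
    have "(x-y)^2 > 0" using xy by simp
    hence "K*(x-y)^2 > 0" using K by simp
    thus ?thesis by (simp add: power2_eq_square algebra_simps)
  qed
  hence "x*y+K < sqrt ((x^2+K)*(y^2+K))" by (rule real_less_rsqrt)
  hence P: "x*y+K < P" unfolding P_def by (simp add: real_sqrt_mult)
  define B where "B = u* sqrt(x^2+K)+(1-u)* sqrt(y^2+K)"
  have Bpos: "B > 0" unfolding B_def using u K
    by (intro add_pos_pos mult_pos_pos) (auto intro: add_nonneg_pos)
  have sx: "sqrt(x^2+K)^2 = x^2+K" using K by (simp add: add_nonneg_pos less_imp_le)
  have sy: "sqrt(y^2+K)^2 = y^2+K" using K by (simp add: add_nonneg_pos less_imp_le)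
  have B2: "B^2 = u^2*(x^2+K) + (1-u)^2*(y^2+K) + 2*u*(1-u)*P"
  proof -
    have "B^2 = u^2* sqrt(x^2+K)^2 + (1-u)^2* sqrt(y^2+K)^2 + 2*u*(1-u)*P"
      unfolding B_def P_def by algebra
    thus ?thesis unfolding sx sy .
  qed
  have "u*(1-u) > 0" using u by simp
  hence "(u*(1-u))*(x*y+K) < (u*(1-u))*P" using P by (intro mult_strict_left_mono) auto
  hence "2*u*(1-u)*(x*y+K) < 2*u*(1-u)*P" by simp
  hence "(u*x+(1-u)*y)^2+K < B^2" unfolding B2
    by (simp add: power2_eq_square algebra_simps)
  hence "sqrt ((u*x+(1-u)*y)^2+K) < sqrt (B^2)" by (rule real_sqrt_less_mono)
  thus ?thesis using Bpos unfolding B_def by simp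
qed

theorem lemma1:
  fixes n :: nat and a b :: real
  assumes "n > 2" and "b \<noteq> 0"
  shows "strict_convex_on UNIV (lam_plus n a b) \<and> strict_concave_on UNIV (lam_minus n a b)
    \<and> (\<forall>c. lam_minus n a b c < lam_sep a c \<and> lam_sep a c < lam_plus n a b c)
    \<and> ((\<lambda>c. lam_plus n a b c - lam_sep a c) \<longlongrightarrow> 0) at_top
    \<and> ((\<lambda>c. lam_minus n a b c - lam_sep a c) \<longlongrightarrow> 0) at_bot
    \<and> ((\<lambda>c. lam_plus n a b c - (- real n * c)) \<longlongrightarrow> 0) at_bot
    \<and> ((\<lambda>c. lam_minus n a b c - (- real n * c)) \<longlongrightarrow> 0) at_top"
proof -
  define K where "K = 4 * real n * b^2"
  define m where "m = real n + 1"
  define s where "s = (\<lambda>c. 2*a + m*c)"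
  define F where "F = (\<lambda>t::real. sqrt (t^2+K) - t)"
  have K: "K > 0" unfolding K_def using assms by simp
  have m: "m > 0" unfolding m_def by simp
  have lp: "lam_plus n a b c = (2*a - (real n - 1)*c + sqrt ((s c)^2 + K)) / 2" for c
    unfolding lam_plus_def s_def m_def K_def by simp
  have lm: "lam_minus n a b c = (2*a - (real n - 1)*c - sqrt ((s c)^2 + K)) / 2" for c
    unfolding lam_minus_def s_def m_def K_def by simp
  have conv: "sqrt ((s (u*x+(1-u)*y))^2+K) < u* sqrt((s x)^2+K)+(1-u)* sqrt((s y)^2+K)"
    if "x \<noteq> y" "0 < u" "u < 1" for x y u
  proof -
    have "s (u*x+(1-u)*y) = u* s x + (1-u)* s y" unfolding s_def by (simp add: algebra_simps)
    moreover have "s x \<noteq> s y" using that m unfolding s_def by simp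
    ultimately show ?thesis using sqrt_conv[OF K _ that(2,3)] by simp
  qed
  have A: "strict_convex_on UNIV (lam_plus n a b)"
    unfolding strict_convex_on_def
  proof (intro conjI ballI impI allI)
    fix x y u :: real assume "x \<noteq> y" "0 < u \<and> u < 1"
    with conv[of x y u] show "lam_plus n a b (u * x + (1 - u) * y)
        < u * lam_plus n a b x + (1 - u) * lam_plus n a b y"
      unfolding lp by (simp add: field_simps)
  qed simp
  have B: "strict_concave_on UNIV (lam_minus n a b)"
    unfolding strict_concave_on_def strict_convex_on_def
  proof (intro conjI ballI impI allI)
    fix x y u :: real assume "x \<noteq> y" "0 < u \<and> u < 1"
    with conv[of x y u] show "- lam_minus n a b (u * x + (1 - u) * y)
        < u * - lam_minus n a b x + (1 - u) * - lam_minus n a b y"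
      unfolding lm by (simp add: field_simps)
  qed simp
  have C: "\<forall>c. lam_minus n a b c < lam_sep a c \<and> lam_sep a c < lam_plus n a b c"
  proof
    fix c
    have "\<bar>s c\<bar> < sqrt ((s c)^2 + K)" by (rule sqrt_gt_abs[OF K])
    thus "lam_minus n a b c < lam_sep a c \<and> lam_sep a c < lam_plus n a b c"
      unfolding lp lm lam_sep_def s_def m_def by (auto simp: field_simps abs_if split: if_splits)
  qed
  have Ft: "((\<lambda>c. F (s c)) \<longlongrightarrow> 0) at_top"
    using filterlim_compose[OF F_lim[OF K, folded F_def] s_top[OF m, of "2*a", folded s_def]] by simp
  have Fb: "((\<lambda>c. F (- s c)) \<longlongrightarrow> 0) at_bot"
    using filterlim_compose[OF F_lim[OF K, folded F_def] s_bot[OF m, of "2*a"]]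
    unfolding s_def by (simp add: o_def)
  have e1: "lam_plus n a b c - lam_sep a c = F (s c) / 2" for c
    unfolding lp lam_sep_def F_def s_def m_def by (simp add: field_simps)
  have e2: "lam_minus n a b c - lam_sep a c = - F (- s c) / 2" for c
    unfolding lm lam_sep_def F_def power2_minus unfolding s_def m_def by (simp add: field_simps)
  have e3: "lam_plus n a b c - (- real n * c) = F (- s c) / 2" for c
    unfolding lp F_def power2_minus unfolding s_def m_def by (simp add: field_simps)
  have e4: "lam_minus n a b c - (- real n * c) = - F (s c) / 2" for c
    unfolding lm F_def s_def m_def by (simp add: field_simps)
  have D: "((\<lambda>c. lam_plus n a b c - lam_sep a c) \<longlongrightarrow> 0) at_top"
    unfolding e1 using tendsto_divide[OF Ft tendsto_const[of 2]] by simp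
  have E: "((\<lambda>c. lam_minus n a b c - lam_sep a c) \<longlongrightarrow> 0) at_bot"
    unfolding e2 using tendsto_divide[OF tendsto_minus[OF Fb] tendsto_const[of 2]] by simp
  have G: "((\<lambda>c. lam_plus n a b c - (- real n * c)) \<longlongrightarrow> 0) at_bot"
    unfolding e3 using tendsto_divide[OF Fb tendsto_const[of 2]] by simp
  have H: "((\<lambda>c. lam_minus n a b c - (- real n * c)) \<longlongrightarrow> 0) at_top"
    unfolding e4 using tendsto_divide[OF tendsto_minus[OF Ft] tendsto_const[of 2]] by simp
  show ?thesis using A B C D E G H by blast
qed

end
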